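(* Consider the action of the translation subgroup $\mathbb{R}^3\subset SE(3)$ on $\mathbb{R}^6$ with coordinates $(\boldsymbol{\omega},\mathbf{v})=(\omega_1,\omega_2,\omega_3,v_1,v_2,v_3)$ given by $\mathbf{r}\cdot(\boldsymbol{\omega},\mathbf{v})=(\boldsymbol{\omega},\ \mathbf{r}\times\boldsymbol{\omega}+\mathbf{v})$. Then $\{\omega_1,\omega_2,\omega_3,\ \boldsymbol{\omega}\cdot\mathbf{v}\}$ is a SAGBI basis, with respect to the lexicographic order $\omega_1>\omega_2>\omega_3>v_1>v_2>v_3$, for the algebra $\mathbb{R}[\omega_1,\dots,v_3]^{\mathbb{R}^3}$ of polynomials invariant under this action; in particular it generates that algebra.
   Context: A SAGBI basis of a subalgebra $A$ of a polynomial ring, with respect to a term order, is a subset $S\subseteq A$ such that the leading monomial of every nonzero $f\in A$ is a product of leading monomials of elements of $S$. *)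

theory Defs
  imports Complex_Main "HOL-Library.Poly_Mapping" "HOL-Library.Multiset"
begin

text \<open>Variables are indexed by naturals; the six coordinates are
x0 = omega1, x1 = omega2, x2 = omega3, x3 = v1, x4 = v2, x5 = v3.\<close>

type_synonym monom = "nat \<Rightarrow>\<^sub>0 nat"
type_synonym rpoly = "monom \<Rightarrow>\<^sub>0 real"

definition Var :: "nat \<Rightarrow> rpoly" where
  "Var i = Poly_Mapping.single (Poly_Mapping.single i 1) 1"

definition Const :: "real \<Rightarrow> rpoly" where
  "Const c = Poly_Mapping.single 0 c"

definition in_R6 :: "rpoly \<Rightarrow> bool" where
  "in_R6 p \<longleftrightarrow> (\<forall>m \<in> Poly_Mapping.keys p. Poly_Mapping.keys m \<subseteq> {..<6})"

definition eval :: "rpoly \<Rightarrow> (nat \<Rightarrow> real) \<Rightarrow> real" where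
  "eval p x = (\<Sum>m \<in> Poly_Mapping.keys p. Poly_Mapping.lookup p m * (\<Prod>i \<in> Poly_Mapping.keys m. x i ^ Poly_Mapping.lookup m i))"

definition act :: "real \<Rightarrow> real \<Rightarrow> real \<Rightarrow> (nat \<Rightarrow> real) \<Rightarrow> (nat \<Rightarrow> real)" where
  "act r1 r2 r3 x = x(3 := x 3 + (r2 * x 2 - r3 * x 1),
                      4 := x 4 + (r3 * x 0 - r1 * x 2),
                      5 := x 5 + (r1 * x 1 - r2 * x 0))"

definition invariant_alg :: "rpoly set" where
  "invariant_alg = {p. in_R6 p \<and> (\<forall>r1 r2 r3 x. eval p (act r1 r2 r3 x) = eval p x)}"

definition lex_less :: "monom \<Rightarrow> monom \<Rightarrow> bool" where
  "lex_less m m' \<longleftrightarrow> (\<exists>i. (\<forall>j<i. Poly_Mapping.lookup m j = Poly_Mapping.lookup m' j) \<and> Poly_Mapping.lookup m i < Poly_Mapping.lookup m' i)"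

definition lead_monom :: "rpoly \<Rightarrow> monom" where
  "lead_monom p = (THE m. m \<in> Poly_Mapping.keys p \<and> (\<forall>m' \<in> Poly_Mapping.keys p. m' \<noteq> m \<longrightarrow> lex_less m' m))"

definition sagbi_basis :: "rpoly set \<Rightarrow> rpoly set \<Rightarrow> bool" where
  "sagbi_basis S A \<longleftrightarrow> S \<subseteq> A \<and>
     (\<forall>f \<in> A. f \<noteq> 0 \<longrightarrow>
        (\<exists>M :: rpoly multiset. set_mset M \<subseteq> S - {0} \<and>
              lead_monom f = sum_mset (image_mset lead_monom M)))"

inductive_set subalg :: "rpoly set \<Rightarrow> rpoly set" for S where
  const: "Const c \<in> subalg S"
| gen: "s \<in> S \<Longrightarrow> s \<in> subalg S"
| add: "p \<in> subalg S \<Longrightarrow> q \<in> subalg S \<Longrightarrow> p + q \<in> subalg S"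
| mult: "p \<in> subalg S \<Longrightarrow> q \<in> subalg S \<Longrightarrow> p * q \<in> subalg S"

end

theory Submission
  imports Defs
begin


abbreviation lk :: "('a \<Rightarrow>\<^sub>0 'b::zero) \<Rightarrow> 'a \<Rightarrow> 'b" where "lk \<equiv> Poly_Mapping.lookup"
abbreviation ks :: "('a \<Rightarrow>\<^sub>0 'b::zero) \<Rightarrow> 'a set" where "ks \<equiv> Poly_Mapping.keys"

definition mnm :: "monom \<Rightarrow> (nat \<Rightarrow> real) \<Rightarrow> real" where
  "mnm m x = (\<Prod>i \<in> ks m. x i ^ lk m i)"

lemma eval_mono: "eval p x = (\<Sum>m \<in> ks p. lk p m * mnm m x)"
  by (simp add: eval_def mnm_def)

lemma mono_superset: "finite K \<Longrightarrow> ks m \<subseteq> K \<Longrightarrow> mnm m x = (\<Prod>i\<in>K. x i ^ lk m i)"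
  unfolding mnm_def
  by (rule prod.mono_neutral_left) (auto simp: in_keys_iff)

lemma keys_add_nat: "ks (m + n :: monom) = ks m \<union> ks n"
  by (auto simp: in_keys_iff lookup_add)

lemma mono_add: "mnm (m + n) x = mnm m x * mnm n x"
proof -
  let ?K = "ks m \<union> ks n"
  have "mnm (m+n) x = (\<Prod>i\<in>?K. x i ^ lk (m+n) i)" by (rule mono_superset) (auto simp: keys_add_nat)
  also have "\<dots> = (\<Prod>i\<in>?K. x i ^ lk m i) * (\<Prod>i\<in>?K. x i ^ lk n i)"
    by (simp add: lookup_add power_add prod.distrib)
  also have "\<dots> = mnm m x * mnm n x"
    using mono_superset[of "ks m \<union> ks n" m x] mono_superset[of "ks m \<union> ks n" n x] by simp
  finally show ?thesis .
qed

lemma mono_zero[simp]: "mnm 0 x = 1" by (simp add: mnm_def)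

lemma eval_superset: "finite K \<Longrightarrow> ks p \<subseteq> K \<Longrightarrow> eval p x = (\<Sum>m\<in>K. lk p m * mnm m x)"
  unfolding eval_mono
  by (rule sum.mono_neutral_left) (auto simp: in_keys_iff)

lemma eval_add: "eval (p + q) x = eval p x + eval q x"
proof -
  let ?K = "ks p \<union> ks q"
  have "eval (p+q) x = (\<Sum>m\<in>?K. lk (p+q) m * mnm m x)"
    using keys_add[of p q] by (intro eval_superset) auto
  also have "\<dots> = (\<Sum>m\<in>?K. lk p m * mnm m x) + (\<Sum>m\<in>?K. lk q m * mnm m x)"
    by (simp add: lookup_add algebra_simps sum.distrib)
  also have "\<dots> = eval p x + eval q x"
    using eval_superset[of "ks p \<union> ks q" p x] eval_superset[of "ks p \<union> ks q" q x] by simp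
  finally show ?thesis .
qed

lemma eval_uminus: "eval (- p) x = - eval p x"
  by (simp add: eval_mono keys_minus sum_negf)

lemma eval_diff: "eval (p - q) x = eval p x - eval q x"
  using eval_add[of p "-q" x] by (simp add: eval_uminus)

lemma eval_zero[simp]: "eval 0 x = 0" by (simp add: eval_def)

lemma eval_single: "eval (Poly_Mapping.single m c) x = c * mnm m x"
  by (subst eval_superset[of "{m}"]) auto

lemma eval_sum: "eval (sum f A) x = (\<Sum>a\<in>A. eval (f a) x)"
  by (induction A rule: infinite_finite_induct) (auto simp: eval_add)

lemma poly_expand: "p = (\<Sum>m\<in>ks p. Poly_Mapping.single m (lk p m))"
  by (rule poly_mapping_eqI) (auto simp: lookup_sum lookup_single when_def in_keys_iff)

lemma mult_expand: "p * q = (\<Sum>u\<in>ks p. \<Sum>v\<in>ks q. Poly_Mapping.single (u+v) (lk p u * lk q v))"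
proof -
  have "p * q = (\<Sum>m\<in>ks p. Poly_Mapping.single m (lk p m)) * (\<Sum>m\<in>ks q. Poly_Mapping.single m (lk q m))"
    by (subst poly_expand[of p], subst poly_expand[of q]) (rule refl)
  also have "\<dots> = (\<Sum>u\<in>ks p. \<Sum>v\<in>ks q. Poly_Mapping.single (u+v) (lk p u * lk q v))"
    by (simp add: sum_product mult_single)
  finally show ?thesis .
qed

lemma eval_mult: "eval (p * q) x = eval p x * eval q x"
proof -
  have "eval (p*q) x = (\<Sum>u\<in>ks p. \<Sum>v\<in>ks q. lk p u * lk q v * mnm (u+v) x)"
    by (simp only: mult_expand eval_sum eval_single)
  then show ?thesis by (simp add: mono_add eval_mono sum_product algebra_simps)
qed

lemma lookup_mult_keys: "lk (p * (q::rpoly)) k = (\<Sum>u\<in>ks p. \<Sum>v\<in>ks q. if u + v = k then lk p u * lk q v else 0)"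
  by (simp add: mult_expand lookup_sum lookup_single when_def)

lemma eval_Const[simp]: "eval (Const c) x = c"
  by (simp add: Const_def eval_single)

lemma eval_Var[simp]: "eval (Var i) x = x i"
  by (simp add: Var_def eval_single mnm_def)




lemma keys_diff_nat: "ks (m - n :: monom) \<subseteq> ks m"
  by (auto simp: in_keys_iff lookup_minus)

lemma in_R6_add: "in_R6 p \<Longrightarrow> in_R6 q \<Longrightarrow> in_R6 (p + q)"
  using keys_add[of p q] unfolding in_R6_def by blast

lemma in_R6_uminus: "in_R6 p \<Longrightarrow> in_R6 (- p)"
  unfolding in_R6_def by (simp add: keys_minus)

lemma in_R6_diff: "in_R6 p \<Longrightarrow> in_R6 q \<Longrightarrow> in_R6 (p - q)"
  using in_R6_add[of p "-q"] in_R6_uminus[of q] by simp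

lemma in_R6_mult: "in_R6 p \<Longrightarrow> in_R6 q \<Longrightarrow> in_R6 (p * q)"
  using keys_mult[of p q] unfolding in_R6_def by (fastforce simp: keys_add_nat)

lemma in_R6_Const: "in_R6 (Const c)"
  by (simp add: in_R6_def Const_def)

lemma in_R6_Var: "i < 6 \<Longrightarrow> in_R6 (Var i)"
  by (simp add: in_R6_def Var_def)

definition invar :: "rpoly \<Rightarrow> bool" where
  "invar p \<longleftrightarrow> (\<forall>r1 r2 r3 x. eval p (act r1 r2 r3 x) = eval p x)"

lemma invariant_alg_iff: "p \<in> invariant_alg \<longleftrightarrow> in_R6 p \<and> invar p"
  by (simp add: invariant_alg_def invar_def)

lemma invar_add: "invar p \<Longrightarrow> invar q \<Longrightarrow> invar (p + q)"
  by (simp add: invar_def eval_add)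
lemma invar_diff: "invar p \<Longrightarrow> invar q \<Longrightarrow> invar (p - q)"
  by (simp add: invar_def eval_diff)
lemma invar_mult: "invar p \<Longrightarrow> invar q \<Longrightarrow> invar (p * q)"
  by (simp add: invar_def eval_mult)
lemma invar_Const: "invar (Const c)"
  by (simp add: invar_def)
lemma invar_Var: "i < 3 \<Longrightarrow> invar (Var i)"
  by (auto simp add: invar_def act_def)

definition sdot :: rpoly where "sdot = Var 0 * Var 3 + Var 1 * Var 4 + Var 2 * Var 5"

lemma invar_sdot: "invar sdot"
  by (simp add: invar_def sdot_def eval_add eval_mult act_def algebra_simps)

abbreviation SS :: "rpoly set" where "SS \<equiv> {Var 0, Var 1, Var 2, Var 0 * Var 3 + Var 1 * Var 4 + Var 2 * Var 5}"

lemma SS_inv: "SS \<subseteq> invariant_alg"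
  using invar_sdot[unfolded sdot_def]
  by (auto simp: invariant_alg_iff invar_Var in_R6_Var in_R6_add in_R6_mult)

lemma subalg_inv: "subalg SS \<subseteq> invariant_alg"
proof
  fix p assume "p \<in> subalg SS"
  then show "p \<in> invariant_alg"
  proof induction
    case (const c) then show ?case by (simp add: invariant_alg_iff in_R6_Const invar_Const)
  next
    case (gen s) then show ?case using SS_inv by blast
  next
    case (add p q) then show ?case by (simp add: invariant_alg_iff in_R6_add invar_add)
  next
    case (mult p q) then show ?case by (simp add: invariant_alg_iff in_R6_mult invar_mult)
  qed
qed

lemma subalg_power: "p \<in> subalg S \<Longrightarrow> p ^ k \<in> subalg S"
proof (induction k)
  case 0
  have "Const 1 \<in> subalg S" by (rule subalg.const)
  then show ?case by (simp add: Const_def)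
qed (auto intro: subalg.mult)

lemma lex_less_iff: "lex_less m m' \<longleftrightarrow> m < m'"
  by (auto simp: lex_less_def less_poly_mapping.rep_eq less_fun_def)

lemma lead_monom_eq: "a \<in> ks p \<Longrightarrow> (\<forall>u\<in>ks p. u \<le> a) \<Longrightarrow> lead_monom p = a"
  unfolding lead_monom_def lex_less_iff
  apply (rule the_equality)
   apply (auto simp: order.order_iff_strict)
  by (metis less_asym)

lemma lead_monom_Max: "p \<noteq> 0 \<Longrightarrow> lead_monom p = Max (ks p)"
  by (rule lead_monom_eq) auto

lemma lead_in_keys: "p \<noteq> 0 \<Longrightarrow> lead_monom p \<in> ks p"
  by (simp add: lead_monom_Max)

lemma lead_max: "u \<in> ks p \<Longrightarrow> u \<le> lead_monom p"
  by (subst lead_monom_Max) auto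

definition bnd :: "rpoly \<Rightarrow> monom \<Rightarrow> real \<Rightarrow> bool" where
  "bnd p a c \<longleftrightarrow> (\<forall>u\<in>ks p. u \<le> a) \<and> lk p a = c"

lemma bnd_lead: "bnd p a c \<Longrightarrow> c \<noteq> 0 \<Longrightarrow> lead_monom p = a \<and> p \<noteq> 0"
  unfolding bnd_def by (auto intro!: lead_monom_eq simp: in_keys_iff)

lemma bnd_mult: assumes "bnd p a c" "bnd q b d" shows "bnd (p * q) (a + b) (c * d)"
proof -
  have 1: "\<forall>w\<in>ks (p*q). w \<le> a + b"
    using keys_mult[of p q] assms unfolding bnd_def by (fastforce intro: add_mono)
  have eq: "u + v = a + b \<longleftrightarrow> u = a \<and> v = b" if "u \<in> ks p" "v \<in> ks q" for u v
  proof
    assume h: "u + v = a + b"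
    have ua: "u \<le> a" "v \<le> b" using assms that unfolding bnd_def by auto
    show "u = a \<and> v = b"
    proof (cases "u = a")
      case True then show ?thesis using h by simp
    next
      case False
      then have "u < a" using ua by simp
      then have "u + v < a + v" by (rule add_strict_right_mono)
      also have "\<dots> \<le> a + b" using ua by (simp add: add_left_mono)
      finally show ?thesis using h by simp
    qed
  qed simp
  have "lk (p * q) (a + b) = (\<Sum>u\<in>ks p. \<Sum>v\<in>ks q. if u = a then (if v = b then lk p u * lk q v else 0) else 0)"
    unfolding lookup_mult_keys by (intro sum.cong refl) (auto simp: eq)
  also have "\<dots> = (\<Sum>u\<in>ks p. if u = a then (\<Sum>v\<in>ks q. if v = b then lk p a * lk q v else 0) else 0)"
    by (intro sum.cong refl) auto
  also have "\<dots> = lk p a * lk q b"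
    by (simp add: in_keys_iff)
  finally show ?thesis using 1 assms by (simp add: bnd_def)
qed

lemma bnd_one: "bnd 1 0 1"
  by (simp add: bnd_def)

lemma bnd_power: "bnd p a c \<Longrightarrow> bnd (p ^ k) (\<Sum>i<k. a) (c ^ k)"
proof (induction k)
  case 0 then show ?case by (simp add: bnd_one)
next
  case (Suc k)
  have "bnd (p * p ^ k) (a + (\<Sum>i<k. a)) (c * c ^ k)" using bnd_mult[OF Suc.prems Suc.IH[OF Suc.prems]] .
  then show ?case by (simp del: sum_constant add: sum.lessThan_Suc add.commute)
qed




lemma digits_inj:
  fixes a b :: "nat \<Rightarrow> nat"
  assumes "\<forall>k<n. a k < B" "\<forall>k<n. b k < B" "(\<Sum>k<n. a k * B^k) = (\<Sum>k<n. b k * B^k)"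
  shows "\<forall>k<n. a k = b k"
  using assms
proof (induction n arbitrary: a b)
  case 0 then show ?case by simp
next
  case (Suc n)
  have a0: "a 0 < B" "b 0 < B" using Suc.prems(1,2) by auto
  have B: "B > 0" using a0 by linarith
  have ea: "(\<Sum>k<Suc n. a k * B^k) = a 0 + B * (\<Sum>k<n. a (Suc k) * B^k)"
    by (simp only: sum.lessThan_Suc_shift) (simp add: sum_distrib_left mult.left_commute)
  have eb: "(\<Sum>k<Suc n. b k * B^k) = b 0 + B * (\<Sum>k<n. b (Suc k) * B^k)"
    by (simp only: sum.lessThan_Suc_shift) (simp add: sum_distrib_left mult.left_commute)
  define X where "X = (\<Sum>k<n. a (Suc k) * B^k)"
  define Y where "Y = (\<Sum>k<n. b (Suc k) * B^k)"
  have E: "a 0 + B * X = b 0 + B * Y" using Suc.prems(3) ea eb X_def Y_def by simp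
  have "(a 0 + B * X) mod B = a 0" using a0 by simp
  moreover have "(b 0 + B * Y) mod B = b 0" using a0 by simp
  ultimately have h0: "a 0 = b 0" using E by metis
  then have "X = Y" using E B by simp
  then have h1: "\<forall>k<n. a (Suc k) = b (Suc k)"
    by (intro Suc.IH) (use Suc.prems X_def Y_def in auto)
  show ?case
  proof (intro allI impI)
    fix k assume "k < Suc n"
    then show "a k = b k" using h0 h1 by (cases k) auto
  qed
qed

lemma U:
  assumes R: "in_R6 p" and Z: "\<forall>x. eval p x = 0"
  shows "p = 0"
proof (rule ccontr)
  assume nz: "p \<noteq> 0"
  define B where "B = Suc (Max (\<Union>m\<in>ks p. lk m ` {..<6}))"
  have lt: "lk m k < B" if "m \<in> ks p" "k < 6" for m k
    unfolding B_def by (rule le_imp_less_Suc, rule Max_ge) (use that in auto)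
  have zero6: "lk m k = 0" if "m \<in> ks p" "\<not> k < 6" for m k
  proof -
    have "ks m \<subseteq> {..<6}" using R that(1) unfolding in_R6_def by auto
    then have "k \<notin> ks m" using that(2) by auto
    then show ?thesis by (simp add: in_keys_iff)
  qed
  define \<phi> where "\<phi> m = (\<Sum>k<6. lk m k * B^k)" for m
  have inj: "inj_on \<phi> (ks p)"
  proof (rule inj_onI)
    fix m m' assume m: "m \<in> ks p" "m' \<in> ks p" "\<phi> m = \<phi> m'"
    have "\<forall>k<6. lk m k = lk m' k"
      by (rule digits_inj[of 6 "lk m" B "lk m'"]) (use m lt in \<open>auto simp: \<phi>_def\<close>)
    then show "m = m'" by (intro poly_mapping_eqI) (metis m(1,2) zero6)
  qed
  have ev: "eval p (\<lambda>k. t^(B^k)) = (\<Sum>m\<in>ks p. lk p m * t^(\<phi> m))" for t :: real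
  proof -
    have "mnm m (\<lambda>k. t^(B^k)) = t^(\<phi> m)" if "m \<in> ks p" for m
    proof -
      have "ks m \<subseteq> {..<6}" using R that unfolding in_R6_def by auto
      then have "mnm m (\<lambda>k. t^(B^k)) = (\<Prod>k<6. (t^(B^k))^(lk m k))" by (simp add: mono_superset)
      also have "\<dots> = (\<Prod>k<6. t^(lk m k * B^k))" by (simp add: power_mult[symmetric] mult.commute)
      also have "\<dots> = t^(\<phi> m)" by (simp add: \<phi>_def power_sum)
      finally show ?thesis .
    qed
    then show ?thesis by (simp add: eval_mono)
  qed
  define N where "N = Max (\<phi> ` ks p)"
  define c where "c j = (\<Sum>m\<in>{m. m \<in> ks p \<and> \<phi> m = j}. lk p m)" for j
  have "(\<Sum>m\<in>ks p. lk p m * t^(\<phi> m)) = (\<Sum>j\<in>{..N}. c j * t^j)" for t :: real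
  proof -
    have "(\<Sum>j\<in>{..N}. c j * t^j) = (\<Sum>j\<in>{..N}. \<Sum>m\<in>{m. m \<in> ks p \<and> \<phi> m = j}. lk p m * t^(\<phi> m))"
      unfolding c_def sum_distrib_right by (intro sum.cong refl) auto
    also have "\<dots> = (\<Sum>m\<in>ks p. lk p m * t^(\<phi> m))"
      by (rule sum.group) (auto simp: N_def)
    finally show ?thesis by simp
  qed
  then have "\<forall>t::real. (\<Sum>j\<le>N. c j * t^j) = 0" using Z ev by metis
  then have cz: "\<forall>j\<le>N. c j = 0" by (simp add: polyfun_eq_0)
  obtain m where m: "m \<in> ks p" using nz by fastforce
  have "{m'. m' \<in> ks p \<and> \<phi> m' = \<phi> m} = {m}" using inj m by (auto dest: inj_onD)
  then have "c (\<phi> m) = lk p m" by (simp add: c_def)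
  moreover have "\<phi> m \<le> N" using m by (simp add: N_def)
  ultimately show False using cz m by (auto simp: in_keys_iff)
qed




abbreviation ee :: "nat \<Rightarrow> monom" where "ee k \<equiv> Poly_Mapping.single k (1::nat)"

lemma lk_shift: "lk (m - ee i + ee a) k = lk m k - (if k = i then 1 else 0) + (if k = a then 1 else 0)"
  by (simp add: lookup_add lookup_minus lookup_single when_def)

lemma ks_shift: "ks (m - ee i + ee a) \<subseteq> ks m \<union> {a}"
  by (auto simp: in_keys_iff lookup_add lookup_minus lookup_single when_def split: if_splits)

lemma prod_split2: "finite K \<Longrightarrow> i \<in> K \<Longrightarrow> j \<in> K \<Longrightarrow> i \<noteq> j \<Longrightarrow>
   (\<Prod>k\<in>K. f k) = f i * f j * (\<Prod>k\<in>K-{i,j}. f k)"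
  by (simp add: prod.remove[of K i] prod.remove[of "K - {i}" j] Diff_insert2[symmetric] insert_commute mult.assoc)

lemma pow_shift: "(y::real) ^ (n + (if k = a then 1 else 0)) = y ^ n * (if k = a then y else 1)"
  by simp

lemma deriv_mono:
  assumes d: "i \<noteq> j" "a \<noteq> i" "a \<noteq> j" "b \<noteq> i" "b \<noteq> j"
  shows "((\<lambda>t. mnm m (x(i := x i + t * x a, j := x j - t * x b))) has_real_derivative
          (of_nat (lk m i) * mnm (m - ee i + ee a) x - of_nat (lk m j) * mnm (m - ee j + ee b) x)) (at 0)"
proof -
  define K where "K = ks m \<union> {i, j, a, b}"
  have fK: "finite K" by (simp add: K_def)
  have iK: "i \<in> K" "j \<in> K" "a \<in> K - {i,j}" "b \<in> K - {i,j}" using d by (auto simp: K_def)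
  define R where "R = (\<Prod>k\<in>K-{i,j}. x k ^ lk m k)"
  let ?y = "\<lambda>t. x(i := x i + t * x a, j := x j - t * x b)"
  have e1: "mnm m (?y t) = (x i + t * x a) ^ lk m i * (x j - t * x b) ^ lk m j * R" for t
  proof -
    have "mnm m (?y t) = (\<Prod>k\<in>K. ?y t k ^ lk m k)" by (rule mono_superset) (auto simp: K_def fK)
    also have "\<dots> = ?y t i ^ lk m i * ?y t j ^ lk m j * (\<Prod>k\<in>K-{i,j}. ?y t k ^ lk m k)"
      by (rule prod_split2) (use fK iK d in auto)
    also have "(\<Prod>k\<in>K-{i,j}. ?y t k ^ lk m k) = R" unfolding R_def by (intro prod.cong refl) auto
    also have "?y t i ^ lk m i * ?y t j ^ lk m j * R = (x i + t * x a) ^ lk m i * (x j - t * x b) ^ lk m j * R"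
      using d by simp
    finally show ?thesis .
  qed
  have e2: "mnm (m - ee i + ee a) x = x i ^ (lk m i - 1) * x j ^ lk m j * (R * x a)"
  proof -
    have "mnm (m - ee i + ee a) x = (\<Prod>k\<in>K. x k ^ lk (m - ee i + ee a) k)"
      by (rule mono_superset) (use ks_shift[of m i a] in \<open>auto simp: K_def fK\<close>)
    also have "\<dots> = x i ^ lk (m - ee i + ee a) i * x j ^ lk (m - ee i + ee a) j * (\<Prod>k\<in>K-{i,j}. x k ^ lk (m - ee i + ee a) k)"
      by (rule prod_split2) (use fK iK d in auto)
    also have "(\<Prod>k\<in>K-{i,j}. x k ^ lk (m - ee i + ee a) k) = (\<Prod>k\<in>K-{i,j}. x k ^ lk m k * (if k = a then x k else 1))"
      by (intro prod.cong refl) (auto simp: lookup_add lookup_minus lookup_single when_def)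
    also have "\<dots> = R * x a" using iK fK by (simp add: prod.distrib R_def prod.delta)
    finally show ?thesis using d by (simp add: lookup_add lookup_minus lookup_single when_def)
  qed
  have e3: "mnm (m - ee j + ee b) x = x i ^ lk m i * x j ^ (lk m j - 1) * (R * x b)"
  proof -
    have "mnm (m - ee j + ee b) x = (\<Prod>k\<in>K. x k ^ lk (m - ee j + ee b) k)"
      by (rule mono_superset) (use ks_shift[of m j b] in \<open>auto simp: K_def fK\<close>)
    also have "\<dots> = x i ^ lk (m - ee j + ee b) i * x j ^ lk (m - ee j + ee b) j * (\<Prod>k\<in>K-{i,j}. x k ^ lk (m - ee j + ee b) k)"
      by (rule prod_split2) (use fK iK d in auto)
    also have "(\<Prod>k\<in>K-{i,j}. x k ^ lk (m - ee j + ee b) k) = (\<Prod>k\<in>K-{i,j}. x k ^ lk m k * (if k = b then x k else 1))"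
      by (intro prod.cong refl) (auto simp: lookup_add lookup_minus lookup_single when_def)
    also have "\<dots> = R * x b" using iK fK by (simp add: prod.distrib R_def prod.delta)
    finally show ?thesis using d by (simp add: lookup_add lookup_minus lookup_single when_def)
  qed
  have D: "((\<lambda>t. (x i + t * x a) ^ lk m i * (x j - t * x b) ^ lk m j * R) has_real_derivative
     (of_nat (lk m i) * x i ^ (lk m i - 1) * x a * x j ^ lk m j * R
      - x i ^ lk m i * (of_nat (lk m j) * x j ^ (lk m j - 1) * x b) * R)) (at 0)"
    apply (rule derivative_eq_intros refl | simp)+
    by (simp add: algebra_simps)
  show ?thesis
    unfolding e1 e2 e3 apply (rule DERIV_cong[OF D])
    by (simp add: algebra_simps)
qed




lemma lkS: "lk (m - Poly_Mapping.single i (Suc 0) + Poly_Mapping.single a (Suc 0)) k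
   = lk m k - (if k = i then 1 else 0) + (if k = a then 1 else 0)"
  by (simp add: lookup_add lookup_minus lookup_single when_def)

lemma shift_eq:
  assumes "a \<noteq> i" "1 \<le> lk m i"
  shows "(m - ee i + ee a = \<mu>) \<longleftrightarrow> (m = \<mu> - ee a + ee i \<and> 1 \<le> lk \<mu> a)"
proof
  assume h: "m - ee i + ee a = \<mu>"
  have hk: "lk \<mu> k = lk m k - (if k=i then 1 else 0) + (if k = a then 1 else 0)" for k
    using lkS[of m i a k] h by simp
  show "m = \<mu> - ee a + ee i \<and> 1 \<le> lk \<mu> a"
  proof
    show "m = \<mu> - ee a + ee i"
    proof (rule poly_mapping_eqI)
      fix k show "lk m k = lk (\<mu> - ee a + ee i) k"
        using hk[of k] assms by (simp add: lkS)
    qed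
    show "1 \<le> lk \<mu> a" using hk[of a] assms by simp
  qed
next
  assume h: "m = \<mu> - ee a + ee i \<and> 1 \<le> lk \<mu> a"
  have hk: "lk m k = lk \<mu> k - (if k=a then 1 else 0) + (if k = i then 1 else 0)" for k
    using lkS[of \<mu> a i k] h by simp
  show "m - ee i + ee a = \<mu>"
  proof (rule poly_mapping_eqI)
    fix k show "lk (m - ee i + ee a) k = lk \<mu> k"
      using hk[of k] h assms by (simp add: lkS)
  qed
qed

lemma sum_shift_coeff:
  fixes f :: rpoly
  assumes ai: "a \<noteq> i"
  shows "(\<Sum>m\<in>ks f. (lk f m * of_nat (lk m i) when m - ee i + ee a = \<mu>))
       = (if 1 \<le> lk \<mu> a then lk f (\<mu> - ee a + ee i) * of_nat (lk \<mu> i + 1) else 0)"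
proof -
  let ?c = "\<mu> - ee a + ee i"
  have pt: "(lk f m * of_nat (lk m i) when m - ee i + ee a = \<mu>)
     = (if m = ?c then (if 1 \<le> lk \<mu> a then lk f m * of_nat (lk \<mu> i + 1) else 0) else 0)" for m
  proof (cases "lk m i = 0")
    case True
    have "m \<noteq> ?c" using True ai lkS[of \<mu> a i i] by auto
    then show ?thesis using True by (simp add: when_def)
  next
    case False
    then have m1: "1 \<le> lk m i" by simp
    show ?thesis
    proof (cases "m - ee i + ee a = \<mu>")
      case True
      then have c: "m = ?c" "1 \<le> lk \<mu> a" using shift_eq[OF ai m1] by auto
      have "lk m i = lk \<mu> i + 1" using c(1) ai lkS[of \<mu> a i i] by simp
      then show ?thesis using True c by (simp add: when_def)
    next
      case False
      then have "\<not> (m = ?c \<and> 1 \<le> lk \<mu> a)" using shift_eq[OF ai m1] by auto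
      then show ?thesis using False by (auto simp: when_def)
    qed
  qed
  have "(\<Sum>m\<in>ks f. (lk f m * of_nat (lk m i) when m - ee i + ee a = \<mu>))
      = (\<Sum>m\<in>ks f. (if m = ?c then (if 1 \<le> lk \<mu> a then lk f m * of_nat (lk \<mu> i + 1) else 0) else 0))"
    by (intro sum.cong refl pt)
  also have "\<dots> = (if ?c \<in> ks f then (if 1 \<le> lk \<mu> a then lk f ?c * of_nat (lk \<mu> i + 1) else 0) else 0)"
    by (simp add: sum.delta)
  also have "\<dots> = (if 1 \<le> lk \<mu> a then lk f ?c * of_nat (lk \<mu> i + 1) else 0)"
    by (auto simp: in_keys_iff)
  finally show ?thesis .
qed

lemma coeff_identity:
  fixes f :: rpoly
  assumes d: "i \<noteq> j" "a \<noteq> i" "a \<noteq> j" "b \<noteq> i" "b \<noteq> j"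
    and lt6: "i < 6" "a < 6" "j < 6" "b < 6"
    and R: "in_R6 f"
    and inv: "\<And>t x. eval f (x(i := x i + t * x a, j := x j - t * x b)) = eval f x"
  shows "(if 1 \<le> lk \<mu> a then lk f (\<mu> - ee a + ee i) * of_nat (lk \<mu> i + 1) else 0)
       = (if 1 \<le> lk \<mu> b then lk f (\<mu> - ee b + ee j) * of_nat (lk \<mu> j + 1) else 0)"
proof -
  define Dp where "Dp = (\<Sum>m\<in>ks f. Poly_Mapping.single (m - ee i + ee a) (lk f m * of_nat (lk m i))
                          - Poly_Mapping.single (m - ee j + ee b) (lk f m * of_nat (lk m j)))"
  have evD: "eval Dp x = (\<Sum>m\<in>ks f. lk f m * (of_nat (lk m i) * mnm (m - ee i + ee a) x - of_nat (lk m j) * mnm (m - ee j + ee b) x))" for x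
    unfolding Dp_def eval_sum by (intro sum.cong refl) (simp add: eval_diff eval_single right_diff_distrib)
  have zero: "eval Dp x = 0" for x
  proof -
    have der: "((\<lambda>t. eval f (x(i := x i + t * x a, j := x j - t * x b))) has_real_derivative eval Dp x) (at 0)"
      unfolding evD by (subst eval_mono) (intro DERIV_sum DERIV_cmult deriv_mono d)
    have "(\<lambda>t. eval f (x(i := x i + t * x a, j := x j - t * x b))) = (\<lambda>t. eval f x)"
      using inv by (intro ext) blast
    then have "((\<lambda>t. eval f x) has_real_derivative eval Dp x) (at 0)" using der by simp
    then show ?thesis using DERIV_const DERIV_unique by blast
  qed
  have RD: "in_R6 Dp"
  proof -
    let ?T = "\<lambda>m. Poly_Mapping.single (m - ee i + ee a) (lk f m * of_nat (lk m i))
                          - Poly_Mapping.single (m - ee j + ee b) (lk f m * of_nat (lk m j))"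
    have sub: "ks Dp \<subseteq> (\<Union>m\<in>ks f. {m - ee i + ee a, m - ee j + ee b})"
    proof
      fix u assume "u \<in> ks Dp"
      then have "u \<in> (\<Union>m\<in>ks f. ks (?T m))" using keys_sum[of ?T "ks f"] unfolding Dp_def by blast
      then obtain m where m: "m \<in> ks f" "u \<in> ks (?T m)" by blast
      have "ks (?T m) \<subseteq> {m - ee i + ee a, m - ee j + ee b}"
        by (rule order.trans[OF keys_diff]) simp
      then show "u \<in> (\<Union>m\<in>ks f. {m - ee i + ee a, m - ee j + ee b})" using m by blast
    qed
    have "ks (m - ee i + ee a) \<subseteq> {..<6} \<and> ks (m - ee j + ee b) \<subseteq> {..<6}" if "m \<in> ks f" for m
    proof -
      have "ks m \<subseteq> {..<6}" using that R unfolding in_R6_def by blast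
      then show ?thesis using ks_shift[of m i a] ks_shift[of m j b] lt6 by blast
    qed
    then show ?thesis using sub unfolding in_R6_def by blast
  qed
  have "Dp = 0" using U[OF RD] zero by blast
  then have "lk Dp \<mu> = 0" by simp
  moreover have "lk Dp \<mu> = (\<Sum>m\<in>ks f. (lk f m * of_nat (lk m i) when m - ee i + ee a = \<mu>))
       - (\<Sum>m\<in>ks f. (lk f m * of_nat (lk m j) when m - ee j + ee b = \<mu>))"
    by (simp add: Dp_def lookup_sum lookup_minus lookup_single sum_subtractf)
  ultimately show ?thesis using sum_shift_coeff[of a i f \<mu>] sum_shift_coeff[of b j f \<mu>] d by simp
qed




lemma act_r3: "act 0 0 t x = x(4 := x 4 + t * x 0, 3 := x 3 - t * x 1)"
  by (rule ext) (simp add: act_def)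
lemma act_r2: "act 0 t 0 x = x(3 := x 3 + t * x 2, 5 := x 5 - t * x 0)"
  by (rule ext) (simp add: act_def)

lemma I3:
  assumes "f \<in> invariant_alg"
  shows "(if 1 \<le> lk \<mu> 0 then lk f (\<mu> - ee 0 + ee 4) * of_nat (lk \<mu> 4 + 1) else 0)
       = (if 1 \<le> lk \<mu> 1 then lk f (\<mu> - ee 1 + ee 3) * of_nat (lk \<mu> 3 + 1) else 0)"
proof (rule coeff_identity[of 4 3 0 1])
  show "in_R6 f" using assms by (simp add: invariant_alg_iff)
  fix t x
  show "eval f (x(4 := x 4 + t * x 0, 3 := x 3 - t * x 1)) = eval f x"
    using assms unfolding invariant_alg_iff invar_def act_r3[symmetric] by blast
qed simp_all

lemma I2:
  assumes "f \<in> invariant_alg"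
  shows "(if 1 \<le> lk \<mu> 2 then lk f (\<mu> - ee 2 + ee 3) * of_nat (lk \<mu> 3 + 1) else 0)
       = (if 1 \<le> lk \<mu> 0 then lk f (\<mu> - ee 0 + ee 5) * of_nat (lk \<mu> 5 + 1) else 0)"
proof (rule coeff_identity[of 3 5 2 0])
  show "in_R6 f" using assms by (simp add: invariant_alg_iff)
  fix t x
  show "eval f (x(3 := x 3 + t * x 2, 5 := x 5 - t * x 0)) = eval f x"
    using assms unfolding invariant_alg_iff invar_def act_r2[symmetric] by blast
qed simp_all

lemma less_at0: "lk m 0 < lk n 0 \<Longrightarrow> m < (n::monom)"
  unfolding less_poly_mapping.rep_eq less_fun_def by (rule exI[of _ 0]) simp

lemma lead4:
  assumes f: "f \<in> invariant_alg" "f \<noteq> 0"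
  shows "lk (lead_monom f) 4 = 0"
proof (rule ccontr)
  define m where "m = lead_monom f"
  assume "lk (lead_monom f) 4 \<noteq> 0"
  then have m4: "1 \<le> lk m 4" by (simp add: m_def)
  have mk: "m \<in> ks f" using f by (simp add: m_def lead_in_keys)
  define \<mu> where "\<mu> = m - ee 4 + ee 0"
  have e1: "\<mu> - ee 0 + ee 4 = m"
    by (rule poly_mapping_eqI) (use m4 in \<open>simp add: \<mu>_def lkS\<close>)
  have l: "lk \<mu> 0 = lk m 0 + 1" "lk \<mu> 4 + 1 = lk m 4" using m4 by (simp_all add: \<mu>_def lkS)
  have "lk f m \<noteq> 0" using mk by (simp add: in_keys_iff)
  then have "(if 1 \<le> lk \<mu> 0 then lk f (\<mu> - ee 0 + ee 4) * of_nat (lk \<mu> 4 + 1) else 0) \<noteq> 0"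
    using l e1 m4 by simp
  then have h: "1 \<le> lk \<mu> 1" "lk f (\<mu> - ee 1 + ee 3) \<noteq> 0"
    unfolding I3[OF f(1)] by (auto split: if_splits)
  define n where "n = \<mu> - ee 1 + ee 3"
  have "n \<in> ks f" using h by (simp add: n_def in_keys_iff)
  then have "n \<le> m" unfolding m_def by (rule lead_max)
  moreover have "m < n" by (rule less_at0) (simp add: n_def lkS l)
  ultimately show False by simp
qed

lemma lead5:
  assumes f: "f \<in> invariant_alg" "f \<noteq> 0"
  shows "lk (lead_monom f) 5 = 0"
proof (rule ccontr)
  define m where "m = lead_monom f"
  assume "lk (lead_monom f) 5 \<noteq> 0"
  then have m5: "1 \<le> lk m 5" by (simp add: m_def)
  have mk: "m \<in> ks f" using f by (simp add: m_def lead_in_keys)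
  define \<mu> where "\<mu> = m - ee 5 + ee 0"
  have e1: "\<mu> - ee 0 + ee 5 = m"
    by (rule poly_mapping_eqI) (use m5 in \<open>simp add: \<mu>_def lkS\<close>)
  have l: "lk \<mu> 0 = lk m 0 + 1" "lk \<mu> 5 + 1 = lk m 5" using m5 by (simp_all add: \<mu>_def lkS)
  have "lk f m \<noteq> 0" using mk by (simp add: in_keys_iff)
  then have "(if 1 \<le> lk \<mu> 0 then lk f (\<mu> - ee 0 + ee 5) * of_nat (lk \<mu> 5 + 1) else 0) \<noteq> 0"
    using l e1 m5 by simp
  then have h: "1 \<le> lk \<mu> 2" "lk f (\<mu> - ee 2 + ee 3) \<noteq> 0"
    unfolding I2[OF f(1), symmetric] by (auto split: if_splits)
  define n where "n = \<mu> - ee 2 + ee 3"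
  have "n \<in> ks f" using h by (simp add: n_def in_keys_iff)
  then have "n \<le> m" unfolding m_def by (rule lead_max)
  moreover have "m < n" by (rule less_at0) (simp add: n_def lkS l)
  ultimately show False by simp
qed

lemma chain:
  assumes f: "f \<in> invariant_alg" and mk: "m \<in> ks f"
  shows "lk m 3 \<le> lk m 0"
proof -
  define n where "n k = m - (Poly_Mapping.single 0 k + Poly_Mapping.single 3 k)
                      + (Poly_Mapping.single 1 k + Poly_Mapping.single 4 k)" for k
  have ln: "lk (n k) q = lk m q - ((if q = 0 then k else 0) + (if q = 3 then k else 0))
             + ((if q = 1 then k else 0) + (if q = 4 then k else 0))" for k q
    by (simp add: n_def lookup_add lookup_minus lookup_single when_def)
  have "k \<le> lk m 3 \<longrightarrow> k \<le> lk m 0 \<and> lk f (n k) \<noteq> 0" for k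
  proof (induction k)
    case 0
    have "n 0 = m" by (rule poly_mapping_eqI) (simp add: ln)
    then show ?case using mk by (simp add: in_keys_iff)
  next
    case (Suc k)
    show ?case
    proof
      assume sk: "Suc k \<le> lk m 3"
      then have IH: "k \<le> lk m 0" "lk f (n k) \<noteq> 0" using Suc.IH by auto
      define \<mu> where "\<mu> = n k - ee 3 + ee 1"
      have lmu: "lk \<mu> q = lk (n k) q - (if q = 3 then 1 else 0) + (if q = 1 then 1 else 0)" for q
        by (simp add: \<mu>_def lkS)
      have e1: "\<mu> - ee 1 + ee 3 = n k"
        by (rule poly_mapping_eqI) (use sk in \<open>auto simp: lkS lmu ln\<close>)
      have "(if 1 \<le> lk \<mu> 1 then lk f (\<mu> - ee 1 + ee 3) * of_nat (lk \<mu> 3 + 1) else 0) \<noteq> 0"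
        using IH sk unfolding e1 by (simp add: lmu ln)
      then have h: "1 \<le> lk \<mu> 0" "lk f (\<mu> - ee 0 + ee 4) \<noteq> 0"
        unfolding I3[OF f, symmetric] by (auto split: if_splits)
      have e2: "\<mu> - ee 0 + ee 4 = n (Suc k)"
        by (rule poly_mapping_eqI) (use sk h(1) in \<open>simp add: lkS lmu ln\<close>)
      show "Suc k \<le> lk m 0 \<and> lk f (n (Suc k)) \<noteq> 0"
        using h e2 IH by (simp add: lmu ln)
    qed
  qed
  then show ?thesis by blast
qed




lemma bnd_Var: "bnd (Var i) (ee i) 1"
  by (simp add: bnd_def Var_def)

lemma Var_mult: "Var i * Var j = Poly_Mapping.single (ee i + ee j) 1"
  by (simp add: Var_def mult_single)

lemma lk_ee_add: "lk (ee i + ee j) q = (if q = i then 1 else 0) + (if q = j then 1 else 0)"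
  by (simp add: lookup_add lookup_single when_def)

lemma bnd_sdot: "bnd (Var 0 * Var 3 + Var 1 * Var 4 + Var 2 * Var 5) (ee 0 + ee 3) 1"
proof -
  have lt: "ee 1 + ee 4 < ee 0 + ee 3" "ee 2 + ee 5 < ee 0 + ee 3"
    by (rule less_at0, simp add: lookup_add lookup_single when_def)+
  then have ne: "ee 1 + ee 4 \<noteq> ee 0 + ee 3" "ee 2 + ee 5 \<noteq> ee 0 + ee 3" by auto
  have ks: "ks (Var 0 * Var 3 + Var 1 * Var 4 + Var 2 * Var 5) \<subseteq> {ee 0 + ee 3, ee 1 + ee 4, ee 2 + ee 5}"
  proof -
    let ?X = "Poly_Mapping.single (ee 0 + ee 3) (1::real)"
    let ?Y = "Poly_Mapping.single (ee 1 + ee 4) (1::real)"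
    let ?Z = "Poly_Mapping.single (ee 2 + ee 5) (1::real)"
    have "ks (?X + ?Y + ?Z) \<subseteq> ks ?X \<union> ks ?Y \<union> ks ?Z"
      using keys_add[of "?X + ?Y" ?Z] keys_add[of ?X ?Y] by blast
    then show ?thesis unfolding Var_mult by (simp; blast)
  qed
  show ?thesis unfolding bnd_def
  proof
    show "\<forall>u\<in>ks (Var 0 * Var 3 + Var 1 * Var 4 + Var 2 * Var 5). u \<le> ee 0 + ee 3"
      using ks lt by fastforce
    show "lk (Var 0 * Var 3 + Var 1 * Var 4 + Var 2 * Var 5) (ee 0 + ee 3) = 1"
      unfolding Var_mult using ne by (simp add: lookup_add lookup_single when_def)
  qed
qed

lemma lk_nsum: "lk (\<Sum>i<k. (a::monom)) q = k * lk a q"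
  by (induction k) (simp_all del: sum_constant add: lookup_add)

lemma lk_sum_rep: "lk (sum_mset (replicate_mset k (a::monom))) q = k * lk a q"
  by (induction k) (simp_all del: sum_mset_replicate_mset add: lookup_add)

lemma lk_Const_mult: "lk (Const c * p) k = c * lk p k"
proof (cases "c = 0")
  case True then show ?thesis by (simp add: Const_def)
next
  case False
  have "lk (Const c * p) k = (\<Sum>v\<in>ks p. if v = k then c * lk p v else 0)"
    by (simp add: lookup_mult_keys Const_def False)
  also have "\<dots> = c * lk p k" by (simp add: sum.delta' in_keys_iff)
  finally show ?thesis .
qed

definition PP :: "monom \<Rightarrow> rpoly" where
  "PP m = Var 0 ^ (lk m 0 - lk m 3) * Var 1 ^ lk m 1 * Var 2 ^ lk m 2
          * (Var 0 * Var 3 + Var 1 * Var 4 + Var 2 * Var 5) ^ lk m 3"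

lemma PP_subalg: "PP m \<in> subalg SS"
  unfolding PP_def by (intro subalg.mult subalg_power subalg.gen) auto

lemma PP_bnd:
  assumes "ks m \<subseteq> {..<6}" "lk m 4 = 0" "lk m 5 = 0" "lk m 3 \<le> lk m 0"
  shows "bnd (PP m) m 1"
proof -
  have b: "bnd (PP m) ((\<Sum>i<lk m 0 - lk m 3. ee 0) + (\<Sum>i<lk m 1. ee 1) + (\<Sum>i<lk m 2. ee 2)
              + (\<Sum>i<lk m 3. ee 0 + ee 3)) 1"
    unfolding PP_def using bnd_mult[OF bnd_mult[OF bnd_mult[OF bnd_power[OF bnd_Var[of 0]] bnd_power[OF bnd_Var[of 1]]]
       bnd_power[OF bnd_Var[of 2]]] bnd_power[OF bnd_sdot]] by simp
  have z: "lk m q = 0" if "q \<ge> 6" for q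
    using assms(1) that by (auto simp: in_keys_iff)
  have "((\<Sum>i<lk m 0 - lk m 3. ee 0) + (\<Sum>i<lk m 1. ee 1) + (\<Sum>i<lk m 2. ee 2)
              + (\<Sum>i<lk m 3. ee 0 + ee 3)) = m"
  proof (rule poly_mapping_eqI)
    fix q
    show "lk ((\<Sum>i<lk m 0 - lk m 3. ee 0) + (\<Sum>i<lk m 1. ee 1) + (\<Sum>i<lk m 2. ee 2)
              + (\<Sum>i<lk m 3. ee 0 + ee 3)) q = lk m q"
      unfolding lookup_add lk_nsum lk_ee_add
      using assms(2,3,4) z[of q] by (cases "q = 4"; cases "q = 5"; auto simp: lookup_single when_def)
  qed
  then show ?thesis using b by simp
qed




definition psi :: "monom \<Rightarrow> nat \<times> nat \<times> nat \<times> nat \<times> nat \<times> nat" where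
  "psi m = (lk m 0, lk m 1, lk m 2, lk m 3, lk m 4, lk m 5)"

definition Rel where
  "Rel = less_than <*lex*> less_than <*lex*> less_than <*lex*> less_than <*lex*> less_than <*lex*> less_than"

lemma wf_Rel: "wf Rel"
  unfolding Rel_def by (intro wf_lex_prod wf_less_than)

lemma psi_less:
  assumes "ks n \<subseteq> {..<6}" "m < n"
  shows "(psi m, psi n) \<in> Rel"
proof -
  obtain k where k: "lk m k < lk n k" and eq: "\<And>k'. k' < k \<Longrightarrow> lk m k' = lk n k'"
    using assms(2) unfolding less_poly_mapping.rep_eq less_fun_def by blast
  have "k \<in> ks n" using k by (auto simp: in_keys_iff)
  then have "k < 6" using assms(1) by auto
  then have "k = 0 \<or> k = 1 \<or> k = 2 \<or> k = 3 \<or> k = 4 \<or> k = 5" by auto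
  then show ?thesis
    using k eq[of 0] eq[of 1] eq[of 2] eq[of 3] eq[of 4]
    by (elim disjE) (simp_all add: psi_def Rel_def)
qed

lemma sub_step:
  "\<forall>f. f \<in> invariant_alg \<longrightarrow> f \<noteq> 0 \<longrightarrow> psi (lead_monom f) = z \<longrightarrow> f \<in> subalg SS"
proof (induction z rule: wf_induct_rule[OF wf_Rel])
  case (1 z)
  show ?case
  proof (intro allI impI)
    fix f assume f: "f \<in> invariant_alg" "f \<noteq> 0" and z: "psi (lead_monom f) = z"
    define m where "m = lead_monom f"
    have mk: "m \<in> ks f" using f by (simp add: m_def lead_in_keys)
    have R6: "ks m \<subseteq> {..<6}" using f(1) mk by (auto simp: invariant_alg_iff in_R6_def)
    have bP: "bnd (PP m) m 1"
      by (rule PP_bnd[OF R6]) (use lead4[OF f] lead5[OF f] chain[OF f(1) mk] in \<open>simp_all add: m_def\<close>)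
    have Psub: "PP m \<in> subalg SS" by (rule PP_subalg)
    have Pinv: "PP m \<in> invariant_alg" using Psub subalg_inv by blast
    define c where "c = lk f m"
    have cPsub: "Const c * PP m \<in> subalg SS" by (intro subalg.mult subalg.const Psub)
    define g where "g = f - Const c * PP m"
    have ginv: "g \<in> invariant_alg"
      using f(1) Pinv unfolding g_def invariant_alg_iff
      by (auto intro: in_R6_diff in_R6_mult in_R6_Const invar_diff invar_mult invar_Const)
    have fg: "f = g + Const c * PP m" by (simp add: g_def)
    show "f \<in> subalg SS"
    proof (cases "g = 0")
      case True then show ?thesis using fg cPsub by simp
    next
      case False
      have lkg: "lk g u = lk f u - c * lk (PP m) u" for u by (simp add: g_def lookup_minus lk_Const_mult)
      have "u < m" if "u \<in> ks g" for u
      proof -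
        have "u \<in> ks f \<or> u \<in> ks (PP m)" using that by (auto simp: in_keys_iff lkg)
        then have "u \<le> m" using bP lead_max[of u f] by (auto simp: bnd_def m_def)
        moreover have "u \<noteq> m" using that bP by (auto simp: in_keys_iff lkg bnd_def c_def)
        ultimately show ?thesis by simp
      qed
      then have "lead_monom g < m" using lead_in_keys[OF False] by blast
      then have "(psi (lead_monom g), z) \<in> Rel" using psi_less[OF R6] z by (simp add: m_def)
      then have "g \<in> subalg SS" using 1 ginv False by blast
      then show ?thesis using fg cPsub by (simp add: subalg.add)
    qed
  qed
qed

lemma inv_sub: "f \<in> invariant_alg \<Longrightarrow> f \<in> subalg SS"
proof (cases "f = 0")
  case True
  have "Const 0 \<in> subalg SS" by (rule subalg.const)
  then show ?thesis using True by (simp add: Const_def)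
qed (use sub_step in blast)

lemma sagbi_part:
  assumes f: "f \<in> invariant_alg" "f \<noteq> 0"
  shows "\<exists>M :: rpoly multiset. set_mset M \<subseteq> SS - {0} \<and> lead_monom f = sum_mset (image_mset lead_monom M)"
proof -
  define m where "m = lead_monom f"
  have mk: "m \<in> ks f" using f by (simp add: m_def lead_in_keys)
  have R6: "ks m \<subseteq> {..<6}" using f(1) mk by (auto simp: invariant_alg_iff in_R6_def)
  have m45: "lk m 4 = 0" "lk m 5 = 0" "lk m 3 \<le> lk m 0"
    using lead4[OF f] lead5[OF f] chain[OF f(1) mk] by (simp_all add: m_def)
  let ?s = "Var 0 * Var 3 + Var 1 * Var 4 + Var 2 * Var 5"
  define M where "M = replicate_mset (lk m 0 - lk m 3) (Var 0) + replicate_mset (lk m 1) (Var 1)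
                    + replicate_mset (lk m 2) (Var 2) + replicate_mset (lk m 3) ?s"
  have L: "lead_monom (Var i) = ee i" "Var i \<noteq> 0" for i
    using bnd_lead[OF bnd_Var[of i]] by simp_all
  have Ls: "lead_monom ?s = ee 0 + ee 3" "?s \<noteq> 0"
    using bnd_lead[OF bnd_sdot] by simp_all
  have "set_mset M \<subseteq> SS - {0}" using L Ls by (auto simp: M_def)
  moreover have "sum_mset (image_mset lead_monom M) = m"
  proof (rule poly_mapping_eqI)
    fix q
    have z: "lk m q = 0" if "q \<ge> 6" using R6 that by (auto simp: in_keys_iff)
    show "lk (sum_mset (image_mset lead_monom M)) q = lk m q"
      unfolding M_def image_mset_union image_replicate_mset sum_mset.union L Ls lookup_add lk_sum_rep lk_ee_add
      using m45 z by (cases "q = 4"; cases "q = 5"; auto simp: lookup_single when_def)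
  qed
  ultimately show ?thesis unfolding m_def by metis
qed

theorem mainTheorem2:
  shows "sagbi_basis {Var 0, Var 1, Var 2, Var 0 * Var 3 + Var 1 * Var 4 + Var 2 * Var 5}
           invariant_alg
       \<and> subalg {Var 0, Var 1, Var 2, Var 0 * Var 3 + Var 1 * Var 4 + Var 2 * Var 5}
           = invariant_alg"
  unfolding sagbi_basis_def
  using SS_inv sagbi_part subalg_inv inv_sub by blast


end
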